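(* Let $\omega>0$ with $\omega\neq 2n\pi$ for all integers $n\ge1$. Let $r\ge1$ and let $f\colon[0,1]\times[-r,r]\to[0,+\infty)$ be continuous and such that $f(t,u)>0$ whenever $0\le t\le 1$ and $2\omega^{-1}|\sin(\tfrac12\omega)|\le|u|\le r$. Then for every $p\in[1,+\infty)$ there exists a parameter $\lambda=\lambda(\omega,p)>0$ such that the periodic boundary value problem $x''(t)+\omega^2x(t)=\lambda f(t,x(t))$, $t\in[0,1]$, $x(0)=x(1)$, $x'(0)=x'(1)$, has a solution $x\colon[0,1]\to[-r,r]$ with $\bigl(\int_0^1|x(t)|^p\,dt\bigr)^{1/p}=2\omega^{-1}|\sin(\tfrac12\omega)|$.
   Context: A solution of the boundary value problem is a twice continuously differentiable function $x\colon[0,1]\to\mathbb R$ satisfying the differential equation on $[0,1]$ and the two periodic boundary conditions. *)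

theory Defs
  imports "HOL-Analysis.Analysis"
begin

definition is_periodic_bvp_solution ::
  "real \<Rightarrow> real \<Rightarrow> (real \<Rightarrow> real \<Rightarrow> real) \<Rightarrow> (real \<Rightarrow> real) \<Rightarrow> bool" where
  "is_periodic_bvp_solution w lam f x \<longleftrightarrow>
     (\<exists>x' x''.
        (\<forall>t\<in>{0..1}. (x has_real_derivative x' t) (at t within {0..1})) \<and>
        (\<forall>t\<in>{0..1}. (x' has_real_derivative x'' t) (at t within {0..1})) \<and>
        continuous_on {0..1} x'' \<and>
        (\<forall>t\<in>{0..1}. x'' t + w\<^sup>2 * x t = lam * f t (x t)) \<and>
        x 0 = x 1 \<and> x' 0 = x' 1)"

end

theory Submission
  imports Defs "HOL-Homology.Homology" "HOL-Complex_Analysis.Great_Picard"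
begin


lemma brouwer_nat:
  fixes g :: "(nat \<Rightarrow> real) \<Rightarrow> (nat \<Rightarrow> real)" and m :: nat
  assumes D: "D = {x. (\<forall>i>m. x i = 0) \<and> (\<Sum>i\<le>m. (x i)^2) \<le> 1}"
  assumes contg: "continuous_on D g" and gD: "g ` D \<subseteq> D"
  shows "\<exists>x\<in>D. g x = x"
proof (rule ccontr)
  assume nofix: "\<not> (\<exists>x\<in>D. g x = x)"
  define Sp where "Sp = {x::nat\<Rightarrow>real. (\<Sum>i\<le>m. (x i)^2) = 1 \<and> (\<forall>i>m. x i = 0)}"
  have SpD: "Sp \<subseteq> D" unfolding Sp_def D by auto
  define nm where "nm v = sqrt (\<Sum>i\<le>m. (v i)^2)" for v :: "nat \<Rightarrow> real"
  define dd where "dd x = (\<lambda>i. x i - g x i)" for x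
  define h where "h x = (\<lambda>i. dd x i / nm (dd x))" for x
  have nm_pos: "nm v > 0" if "\<exists>i\<le>m. v i \<noteq> 0" for v
  proof -
    from that obtain j where j: "j \<le> m" "v j \<noteq> 0" by auto
    have "(v j)^2 \<le> (\<Sum>i\<le>m. (v i)^2)"
      using j by (intro member_le_sum) auto
    moreover have "(v j)^2 > 0" using j by simp
    ultimately have "0 < (\<Sum>i\<le>m. (v i)^2)" by linarith
    then show ?thesis unfolding nm_def by simp
  qed
  have dpos: "nm (dd x) > 0" if x: "x \<in> D" for x
  proof -
    have "\<exists>i\<le>m. dd x i \<noteq> 0"
    proof (rule ccontr)
      assume "\<not> ?thesis"
      then have "\<forall>i\<le>m. g x i = x i" unfolding dd_def by auto
      moreover have "\<forall>i>m. g x i = x i" using x gD unfolding D by auto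
      ultimately have "g x = x" by (metis not_le ext)
      with x nofix show False by auto
    qed
    then show ?thesis by (rule nm_pos)
  qed
  have nm_sq: "(nm v)^2 = (\<Sum>i\<le>m. (v i)^2)" for v
    unfolding nm_def by (simp add: sum_nonneg)
  have hSp: "h x \<in> Sp" if x: "x \<in> D" for x
  proof -
    have p: "nm (dd x) > 0" using dpos x .
    have "(\<Sum>i\<le>m. (h x i)^2) = (\<Sum>i\<le>m. (dd x i)^2) / (nm (dd x))^2"
      unfolding h_def by (simp add: power_divide sum_divide_distrib)
    also have "\<dots> = 1" using p nm_sq[of "dd x"] by (metis divide_self less_irrefl zero_less_power)
    finally show ?thesis using x gD unfolding Sp_def h_def dd_def D by auto
  qed
  have key: "(\<Sum>i\<le>m. x i * h x i) > 0" if x: "x \<in> Sp" for x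
  proof -
    have xD: "x \<in> D" using x SpD by auto
    have gx: "(\<Sum>i\<le>m. (g x i)^2) \<le> 1" using gD xD unfolding D by auto
    have x1: "(\<Sum>i\<le>m. (x i)^2) = 1" using x unfolding Sp_def by auto
    have p: "nm (dd x) > 0" using dpos xD .
    have e1: "(\<Sum>i\<le>m. (dd x i)^2) = (\<Sum>i\<le>m. (x i)^2) - 2 * (\<Sum>i\<le>m. x i * g x i) + (\<Sum>i\<le>m. (g x i)^2)"
      unfolding dd_def by (simp add: power2_diff sum.distrib sum_subtractf sum_distrib_left algebra_simps)
    have e2: "(\<Sum>i\<le>m. x i * dd x i) = (\<Sum>i\<le>m. (x i)^2) - (\<Sum>i\<le>m. x i * g x i)"
      unfolding dd_def by (simp add: sum_subtractf algebra_simps power2_eq_square)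
    have "(\<Sum>i\<le>m. x i * dd x i) \<ge> (nm (dd x))^2 / 2"
      using e1 e2 gx x1 nm_sq[of "dd x"] by linarith
    moreover have "(nm (dd x))^2 > 0" using p by simp
    ultimately have "(\<Sum>i\<le>m. x i * dd x i) > 0" by linarith
    moreover have "(\<Sum>i\<le>m. x i * h x i) = (\<Sum>i\<le>m. x i * dd x i) / nm (dd x)"
      unfolding h_def by (simp add: sum_divide_distrib)
    ultimately show ?thesis using p by simp
  qed
  have cont_dd: "continuous_on D dd"
    unfolding dd_def
    by (intro continuous_on_coordinatewise_then_product continuous_intros continuous_on_product_then_coordinatewise[OF contg])
      (auto intro: continuous_on_subset[OF continuous_on_product_coordinates])
  have cont_nm: "continuous_on S (\<lambda>x. nm (k x))" if "continuous_on S k" for S and k :: "'z::topological_space \<Rightarrow> nat \<Rightarrow> real"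
    unfolding nm_def
    by (intro continuous_intros continuous_on_product_then_coordinatewise[OF that])
  have cont_h: "continuous_on D h"
    unfolding h_def
    apply (intro continuous_on_coordinatewise_then_product continuous_intros continuous_on_product_then_coordinatewise[OF cont_dd] cont_nm[OF cont_dd])
    using dpos by force
  have normSp: "(\<lambda>i. v i / nm v) \<in> Sp" if "nm v > 0" "\<forall>i>m. v i = 0" for v
  proof -
    have "(\<Sum>i\<le>m. (v i / nm v)^2) = (\<Sum>i\<le>m. (v i)^2) / (nm v)^2"
      by (simp add: power_divide sum_divide_distrib)
    also have "\<dots> = 1" using that nm_sq[of v] by (metis divide_self less_irrefl zero_less_power)
    finally show ?thesis using that unfolding Sp_def by auto
  qed
  have nm1: "nm x = 1" if "x \<in> Sp" for x using that unfolding Sp_def nm_def by simp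
  have top: "nsphere m = top_of_set Sp"
    by (simp add: nsphere Sp_def euclidean_product_topology)
  define Q where "Q z = (\<lambda>i. (1 - fst z) * snd z i + fst z * h (snd z) i)" for z :: "real \<times> (nat \<Rightarrow> real)"
  have Qpos: "nm (Q z) > 0" if z: "z \<in> {0..1} \<times> Sp" for z
  proof (rule nm_pos, rule ccontr)
    assume "\<not> (\<exists>i\<le>m. Q z i \<noteq> 0)"
    hence "(\<Sum>i\<le>m. snd z i * Q z i) = 0" by simp
    moreover have "(\<Sum>i\<le>m. snd z i * Q z i) = (1 - fst z) * (\<Sum>i\<le>m. (snd z i)^2) + fst z * (\<Sum>i\<le>m. snd z i * h (snd z) i)"
    proof -
      have "(\<Sum>i\<le>m. snd z i * Q z i) = (\<Sum>i\<le>m. (1 - fst z) * (snd z i)^2 + fst z * (snd z i * h (snd z) i))"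
        unfolding Q_def by (intro sum.cong) (auto simp: algebra_simps power2_eq_square)
      also have "\<dots> = (1 - fst z) * (\<Sum>i\<le>m. (snd z i)^2) + fst z * (\<Sum>i\<le>m. snd z i * h (snd z) i)"
        by (simp add: sum.distrib sum_distrib_left)
      finally show ?thesis .
    qed
    moreover have "(\<Sum>i\<le>m. (snd z i)^2) = 1" using z unfolding Sp_def by auto
    moreover have "(\<Sum>i\<le>m. snd z i * h (snd z) i) > 0" using key z by auto
    moreover have "0 \<le> fst z" "fst z \<le> 1" using z by auto
    ultimately show False
      by (smt (verit, best) mult_nonneg_nonneg mult_pos_pos)
  qed
  have hS: "h x \<in> Sp" if "x \<in> Sp" for x using hSp SpD that by auto
  have contQ: "continuous_on ({0..1} \<times> Sp) Q"
    unfolding Q_def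
  proof (intro continuous_on_coordinatewise_then_product continuous_intros)
    fix i
    show "continuous_on ({0..1} \<times> Sp) (\<lambda>x. snd x i)"
      by (rule continuous_on_product_then_coordinatewise[OF continuous_on_snd[OF continuous_on_id]])
    have "continuous_on ({0..1} \<times> Sp) (\<lambda>x. h (snd x))"
      by (rule continuous_on_compose2[OF cont_h continuous_on_snd[OF continuous_on_id]]) (use SpD in auto)
    then show "continuous_on ({0..1} \<times> Sp) (\<lambda>x. h (snd x) i)"
      by (rule continuous_on_product_then_coordinatewise)
  qed
  have hom1: "homotopic_with (\<lambda>_. True) (nsphere m) (nsphere m) id h"
  proof (subst homotopic_with, simp, intro exI conjI)
    let ?H = "\<lambda>z. (\<lambda>i. Q z i / nm (Q z))"
    show "continuous_map (prod_topology (top_of_set {0..1}) (nsphere m)) (nsphere m) ?H"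
      unfolding top prod_topology_subtopology_eu continuous_map_subtopology_eu
    proof
      show "continuous_on ({0..1} \<times> Sp) ?H"
        apply (intro continuous_on_coordinatewise_then_product continuous_intros continuous_on_product_then_coordinatewise[OF contQ] cont_nm[OF contQ])
        using Qpos by force
      show "?H \<in> {0..1} \<times> Sp \<rightarrow> Sp"
      proof
        fix z :: "real \<times> (nat \<Rightarrow> real)" assume z: "z \<in> {0..1} \<times> Sp"
        have "\<forall>i>m. Q z i = 0" using z hS[of "snd z"] unfolding Q_def Sp_def by auto
        then show "?H z \<in> Sp" using normSp Qpos z by blast
      qed
    qed
    show "\<forall>x\<in>topspace (nsphere m). ?H (0, x) = id x"
      unfolding top by (auto simp: Q_def nm1)
    show "\<forall>x\<in>topspace (nsphere m). ?H (1, x) = h x"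
      unfolding top using hS by (auto simp: Q_def nm1)
  qed simp
  have hom2: "homotopic_with (\<lambda>_. True) (nsphere m) (nsphere m) h (\<lambda>_. h (\<lambda>i. 0))"
  proof (subst homotopic_with, simp, intro exI conjI)
    let ?H = "\<lambda>z. h (\<lambda>i. (1 - fst z) * snd z i)"
    have inD: "(\<lambda>i. (1 - fst z) * snd z i) \<in> D" if z: "z \<in> {0..1} \<times> Sp" for z :: "real \<times> (nat \<Rightarrow> real)"
    proof -
      have "(\<Sum>i\<le>m. ((1 - fst z) * snd z i)^2) = (1 - fst z)^2 * (\<Sum>i\<le>m. (snd z i)^2)"
        by (simp add: power_mult_distrib sum_distrib_left)
      also have "\<dots> = (1 - fst z)^2" using z unfolding Sp_def by auto
      also have "\<dots> \<le> 1" using z by (auto simp: power_le_one)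
      finally show ?thesis using z unfolding D Sp_def by auto
    qed
    show "continuous_map (prod_topology (top_of_set {0..1}) (nsphere m)) (nsphere m) ?H"
      unfolding top prod_topology_subtopology_eu continuous_map_subtopology_eu
    proof
      show "continuous_on ({0..1} \<times> Sp) ?H"
        apply (rule continuous_on_compose2[OF cont_h])
         apply (intro continuous_on_coordinatewise_then_product continuous_intros)
         apply (rule continuous_on_product_then_coordinatewise[OF continuous_on_snd[OF continuous_on_id]])
        using inD by auto
      show "?H \<in> {0..1} \<times> Sp \<rightarrow> Sp" using inD hSp by auto
    qed
    show "\<forall>x\<in>topspace (nsphere m). ?H (0, x) = h x" by simp
    show "\<forall>x\<in>topspace (nsphere m). ?H (1, x) = h (\<lambda>i. 0)" by simp
  qed simp
  have "contractible_space (nsphere m)"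
    unfolding contractible_space_def using homotopic_with_trans[OF hom1 hom2] by blast
  then show False using non_contractible_space_nsphere by blast
qed
lemma brouwer_box:
  fixes g :: "(nat \<Rightarrow> real) \<Rightarrow> (nat \<Rightarrow> real)" and m :: nat
  assumes contg: "continuous_on UNIV g"
    and bd: "\<And>x i. i \<le> m \<Longrightarrow> \<bar>g x i\<bar> \<le> 1"
    and zr: "\<And>x i. i > m \<Longrightarrow> g x i = 0"
  shows "\<exists>x. g x = x"
proof -
  define R :: real where "R = real m + 1"
  have R: "R \<ge> 1" unfolding R_def by simp
  define D where "D = {x::nat\<Rightarrow>real. (\<forall>i>m. x i = 0) \<and> (\<Sum>i\<le>m. (x i)^2) \<le> 1}"
  define g' where "g' y = (\<lambda>i. g (\<lambda>j. R * y j) i / R)" for y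
  have "continuous_on D g'"
    unfolding g'_def
    apply (intro continuous_on_coordinatewise_then_product continuous_intros)
     apply (rule continuous_on_product_then_coordinatewise)
     apply (rule continuous_on_compose2[OF contg])
      apply (intro continuous_on_coordinatewise_then_product continuous_intros)
      apply (rule continuous_on_product_then_coordinatewise[OF continuous_on_id])
    using R by auto
  moreover have "g' ` D \<subseteq> D"
  proof
    fix z assume "z \<in> g' ` D"
    then obtain y where z: "z = g' y" by auto
    have "(\<Sum>i\<le>m. (z i)^2) \<le> (\<Sum>i\<le>m. 1 / R^2)"
    proof (rule sum_mono)
      fix i assume "i \<in> {..m}"
      then have "\<bar>g (\<lambda>j. R * y j) i\<bar> \<le> 1" using bd by auto
      then have "(g (\<lambda>j. R * y j) i)^2 \<le> 1" by (metis abs_le_square_iff abs_one one_power2)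
      then show "(z i)^2 \<le> 1 / R^2" using R unfolding z g'_def by (simp add: power_divide divide_right_mono)
    qed
    also have "\<dots> = (real m + 1) / R^2" by simp
    also have "\<dots> \<le> 1" using R unfolding R_def by (simp add: power2_eq_square)
    finally show "z \<in> D" unfolding D_def z g'_def using zr by auto
  qed
  ultimately obtain y where "y \<in> D" "g' y = y" using brouwer_nat[OF D_def] by blast
  then have "g (\<lambda>j. R * y j) = (\<lambda>j. R * y j)"
    using R unfolding g'_def by (auto simp: fun_eq_iff field_simps dest: fun_cong)
  then show ?thesis by blast
qed



lemma alg_U:
  fixes A1 B1 A2 B2 X Y H C S C1 S1 cc w t Z :: real
  assumes "A1 * X + B1 * Y - A2 * X - B2 * Y = 0"
  shows "0 * Z + (- B1 * (0 * t + 1 * w - 0) * C + X * H * A1 + (A1 * (0 * t + 1 * w - 0) * S + Y * H * B1)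
     + (- B2 * (0 * t + 1 * w + 0) * (C1 - C) + (0 - X * H) * A2) + (A2 * (0 * t + 1 * w + 0) * (S1 - S) + (0 - Y * H) * B2)) * cc
   = cc * w * (- B1 * C + A1 * S - B2 * (C1 - C) + A2 * (S1 - S))" (is "?L = ?R")
proof -
  have "?L - ?R = cc * H * (A1 * X + B1 * Y - A2 * X - B2 * Y)" by (simp add: algebra_simps)
  then show ?thesis using assms by simp
qed

lemma alg_U1:
  fixes A1 B1 A2 B2 X Y H C S C1 S1 cc w t Z s :: real
  assumes "- B1 * X + A1 * Y + B2 * X - A2 * Y = 2 * s" "cc * w * (2 * s) = 1"
  shows "0 * Z + (- (A1 * (0 * t + 1 * w - 0)) * C + X * H * - B1 + (- B1 * (0 * t + 1 * w - 0) * S + Y * H * A1)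
     - (A2 * (0 * t + 1 * w + 0) * (C1 - C) + (0 - X * H) * B2) + (- B2 * (0 * t + 1 * w + 0) * (S1 - S) + (0 - Y * H) * A2)) * (cc * w)
   = H - w^2 * (cc * (A1 * C + B1 * S + A2 * (C1 - C) + B2 * (S1 - S)))" (is "?L = ?R")
proof -
  have "?L - ?R = cc * w * H * (- B1 * X + A1 * Y + B2 * X - A2 * Y) - H" by (simp add: algebra_simps power2_eq_square)
  also have "\<dots> = cc * w * (2 * s) * H - H" using assms(1) by simp
  also have "\<dots> = 0" using assms(2) by simp
  finally show ?thesis by simp
qed

locale bvp =
  fixes w :: real
  assumes w_pos: "w > 0" and s2nz: "sin (w/2) \<noteq> 0"
begin

definition cc where "cc = 1 / (2 * w * sin (w/2))"
definition Ci where "Ci h t = integral {0..t} (\<lambda>s. cos (w * s) * h s)"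
definition Si where "Si h t = integral {0..t} (\<lambda>s. sin (w * s) * h s)"
definition U where "U h t = cc * (cos (w*t - w/2) * Ci h t + sin (w*t - w/2) * Si h t
   + cos (w*t + w/2) * (Ci h 1 - Ci h t) + sin (w*t + w/2) * (Si h 1 - Si h t))"
definition U1 where "U1 h t = cc * w * (- sin (w*t - w/2) * Ci h t + cos (w*t - w/2) * Si h t
   - sin (w*t + w/2) * (Ci h 1 - Ci h t) + cos (w*t + w/2) * (Si h 1 - Si h t))"

lemma dCi: "continuous_on {0..1} h \<Longrightarrow> t \<in> {0..1} \<Longrightarrow> (Ci h has_real_derivative cos (w*t) * h t) (at t within {0..1})"
  unfolding Ci_def[abs_def]
  by (rule integral_has_real_derivative) (auto intro!: continuous_intros)

lemma dSi: "continuous_on {0..1} h \<Longrightarrow> t \<in> {0..1} \<Longrightarrow> (Si h has_real_derivative sin (w*t) * h t) (at t within {0..1})"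
  unfolding Si_def[abs_def]
  by (rule integral_has_real_derivative) (auto intro!: continuous_intros)

lemma trig1: "cos ((a::real) - b) * cos a + sin (a - b) * sin a - cos (a + b) * cos a - sin (a + b) * sin a = 0"
proof -
  have 1: "cos (a - b) * cos a + sin (a - b) * sin a = cos b"
    using cos_diff[of "a - b" a] by simp
  have 2: "cos (a + b) * cos a + sin (a + b) * sin a = cos b"
    using cos_diff[of "a + b" a] by simp
  show ?thesis using 1 2 by linarith
qed

lemma trig2: "- sin ((a::real) - b) * cos a + cos (a - b) * sin a + sin (a + b) * cos a - cos (a + b) * sin a = 2 * sin b"
proof -
  have 1: "- sin (a - b) * cos a + cos (a - b) * sin a = sin b"
    using sin_diff[of a "a - b"] by (simp add: algebra_simps)
  have 2: "sin (a + b) * cos a - cos (a + b) * sin a = sin b"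
    using sin_diff[of "a + b" a] by simp
  show ?thesis using 1 2 by linarith
qed

lemma U_deriv:
  assumes h: "continuous_on {0..1} h" and t: "t \<in> {0..1}"
  shows "(U h has_real_derivative U1 h t) (at t within {0..1})"
proof -
  have e: "cos (w*t - w/2) * cos (w*t) + sin (w*t - w/2) * sin (w*t) - cos (w*t + w/2) * cos (w*t) - sin (w*t + w/2) * sin (w*t) = 0"
    by (rule trig1)
  have "((\<lambda>t. U h t) has_real_derivative U1 h t) (at t within {0..1})"
    unfolding U_def
    apply (rule derivative_eq_intros dCi[OF h t] dSi[OF h t] refl)+
    using e unfolding U1_def by (rule alg_U)
  then show ?thesis by (metis (no_types) ext)
qed

lemma U1_deriv:
  assumes h: "continuous_on {0..1} h" and t: "t \<in> {0..1}"
  shows "(U1 h has_real_derivative (h t - w^2 * U h t)) (at t within {0..1})"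
proof -
  have e: "- sin (w*t - w/2) * cos (w*t) + cos (w*t - w/2) * sin (w*t) + sin (w*t + w/2) * cos (w*t) - cos (w*t + w/2) * sin (w*t) = 2 * sin (w/2)"
    by (rule trig2)
  have c: "cc * w * (2 * sin (w/2)) = 1" unfolding cc_def using w_pos s2nz by simp
  have "((\<lambda>t. U1 h t) has_real_derivative (h t - w^2 * U h t)) (at t within {0..1})"
    unfolding U1_def
    apply (rule derivative_eq_intros dCi[OF h t] dSi[OF h t] refl)+
    using e c unfolding U_def by (rule alg_U1)
  then show ?thesis by (metis (no_types) ext)
qed

lemma Ci0: "Ci h 0 = 0" and Si0: "Si h 0 = 0"
  unfolding Ci_def Si_def by simp_all

lemma U_periodic: "U h 0 = U h 1" "U1 h 0 = U1 h 1"
  unfolding U_def U1_def Ci0 Si0 by (simp_all add: algebra_simps)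

lemma cont_sub: "continuous_on {0..1} h \<Longrightarrow> {a..b} \<subseteq> {0..1} \<Longrightarrow>
   (\<lambda>s. (x * cos (w * s) + y * sin (w * s)) * h s) integrable_on {a..b}"
  by (intro integrable_continuous_interval continuous_intros) (auto elim: continuous_on_subset)

lemma int_lin:
  fixes f g :: "real \<Rightarrow> real"
  assumes f: "f integrable_on S" and g: "g integrable_on S"
  shows "integral S (\<lambda>x. a * f x + b * g x) = a * integral S f + b * integral S g"
proof -
  have "(\<lambda>x. a * f x) integrable_on S" "(\<lambda>x. b * g x) integrable_on S"
    using integrable_on_cmult_left[OF f, of a] integrable_on_cmult_left[OF g, of b] by simp_all
  then show ?thesis by (simp add: integral_add)
qed

lemma int_rep1:
  assumes h: "continuous_on {0..1} h" and t: "t \<in> {0..1}"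
  shows "a * Ci h t + b * Si h t = integral {0..t} (\<lambda>s. (a * cos (w * s) + b * sin (w * s)) * h s)"
proof -
  have i1: "(\<lambda>s. (1 * cos (w * s) + 0 * sin (w * s)) * h s) integrable_on {0..t}"
    and i2: "(\<lambda>s. (0 * cos (w * s) + 1 * sin (w * s)) * h s) integrable_on {0..t}"
    using t by (intro cont_sub[OF h]; auto)+
  have "integral {0..t} (\<lambda>s. (a * cos (w * s) + b * sin (w * s)) * h s)
      = integral {0..t} (\<lambda>s. a * (cos (w * s) * h s) + b * (sin (w * s) * h s))"
    by (simp add: algebra_simps)
  also have "\<dots> = a * Ci h t + b * Si h t"
    using int_lin[OF i1[simplified] i2[simplified]] unfolding Ci_def Si_def by simp
  finally show ?thesis by simp
qed

lemma int_rep2: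
  assumes h: "continuous_on {0..1} h" and t: "t \<in> {0..1}"
  shows "a * (Ci h 1 - Ci h t) + b * (Si h 1 - Si h t) = integral {t..1} (\<lambda>s. (a * cos (w * s) + b * sin (w * s)) * h s)"
proof -
  have i1: "(\<lambda>s. (1 * cos (w * s) + 0 * sin (w * s)) * h s) integrable_on {0..1}"
    and i2: "(\<lambda>s. (0 * cos (w * s) + 1 * sin (w * s)) * h s) integrable_on {0..1}"
    using t by (intro cont_sub[OF h]; auto)+
  have "Ci h 1 - Ci h t = integral {t..1} (\<lambda>s. cos (w * s) * h s)"
    using Henstock_Kurzweil_Integration.integral_combine[where a=0 and c=t and b=1 and f="\<lambda>s. cos (w * s) * h s"] i1 t unfolding Ci_def by auto
  moreover have "Si h 1 - Si h t = integral {t..1} (\<lambda>s. sin (w * s) * h s)"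
    using Henstock_Kurzweil_Integration.integral_combine[where a=0 and c=t and b=1 and f="\<lambda>s. sin (w * s) * h s"] i2 t unfolding Si_def by auto
  moreover have i1': "(\<lambda>s. (1 * cos (w * s) + 0 * sin (w * s)) * h s) integrable_on {t..1}"
    and i2': "(\<lambda>s. (0 * cos (w * s) + 1 * sin (w * s)) * h s) integrable_on {t..1}"
    using t by (intro cont_sub[OF h]; auto)+
  moreover have "integral {t..1} (\<lambda>s. (a * cos (w * s) + b * sin (w * s)) * h s)
      = integral {t..1} (\<lambda>s. a * (cos (w * s) * h s) + b * (sin (w * s) * h s))"
    by (simp add: algebra_simps)
  ultimately show ?thesis using int_lin[OF i1'[simplified] i2'[simplified]] by simp
qed

lemma int_bound:
  assumes h: "continuous_on {0..1} h" and hpos: "\<And>s. s \<in> {0..1} \<Longrightarrow> h s \<ge> 0" and t: "t \<in> {0..1}"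
    and ab: "\<And>s. \<bar>a * cos (w * s) + b * sin (w * s)\<bar> \<le> 1"
    and cd: "\<And>s. \<bar>c * cos (w * s) + d * sin (w * s)\<bar> \<le> 1"
  shows "\<bar>a * Ci h t + b * Si h t + (c * (Ci h 1 - Ci h t) + d * (Si h 1 - Si h t))\<bar> \<le> integral {0..1} h"
proof -
  have hi: "h integrable_on {0..1}" using h integrable_continuous_interval by blast
  have "norm (integral {0..t} (\<lambda>s. (a * cos (w * s) + b * sin (w * s)) * h s)) \<le> integral {0..t} h"
    apply (rule Henstock_Kurzweil_Integration.integral_norm_bound_integral)
      apply (rule cont_sub[OF h]) using t apply simp
     apply (rule integrable_on_subinterval[OF hi]) using t apply simp
    using ab hpos t by (auto simp: abs_mult intro!: mult_left_le_one_le)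
  then have "\<bar>a * Ci h t + b * Si h t\<bar> \<le> integral {0..t} h"
    unfolding int_rep1[OF h t] by simp
  moreover have "norm (integral {t..1} (\<lambda>s. (c * cos (w * s) + d * sin (w * s)) * h s)) \<le> integral {t..1} h"
    apply (rule Henstock_Kurzweil_Integration.integral_norm_bound_integral)
      apply (rule cont_sub[OF h]) using t apply simp
     apply (rule integrable_on_subinterval[OF hi]) using t apply simp
    using cd hpos t by (auto simp: abs_mult intro!: mult_left_le_one_le)
  then have "\<bar>c * (Ci h 1 - Ci h t) + d * (Si h 1 - Si h t)\<bar> \<le> integral {t..1} h"
    unfolding int_rep2[OF h t] by simp
  moreover have "integral {0..t} h + integral {t..1} h = integral {0..1} h"
    using Henstock_Kurzweil_Integration.integral_combine[where a=0 and c=t and b=1 and f=h] hi t by auto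
  ultimately show ?thesis by linarith
qed

lemma cs1: "\<bar>cos a * cos (x::real) + sin a * sin x\<bar> \<le> 1"
  using cos_diff[of x a] abs_cos_le_one[of "x - a"] by (simp add: algebra_simps)

lemma cs2: "\<bar>- sin a * cos (x::real) + cos a * sin x\<bar> \<le> 1"
proof -
  have "- sin a * cos x + cos a * sin x = sin (x - a)" by (simp add: sin_diff algebra_simps)
  then show ?thesis using abs_sin_le_one[of "x - a"] by simp
qed

lemma U_bound:
  assumes h: "continuous_on {0..1} h" and hpos: "\<And>s. s \<in> {0..1} \<Longrightarrow> h s \<ge> 0" and t: "t \<in> {0..1}"
  shows "\<bar>U h t\<bar> \<le> \<bar>cc\<bar> * integral {0..1} h"
proof -
  have "\<bar>cos (w*t - w/2) * Ci h t + sin (w*t - w/2) * Si h t + (cos (w*t + w/2) * (Ci h 1 - Ci h t) + sin (w*t + w/2) * (Si h 1 - Si h t))\<bar> \<le> integral {0..1} h"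
    by (rule int_bound[OF h hpos t cs1 cs1])
  then show ?thesis unfolding U_def abs_mult by (simp add: add.assoc mult_left_mono)
qed

lemma U1_bound:
  assumes h: "continuous_on {0..1} h" and hpos: "\<And>s. s \<in> {0..1} \<Longrightarrow> h s \<ge> 0" and t: "t \<in> {0..1}"
  shows "\<bar>U1 h t\<bar> \<le> \<bar>cc\<bar> * w * integral {0..1} h"
proof -
  have "\<bar>- sin (w*t - w/2) * Ci h t + cos (w*t - w/2) * Si h t + (- sin (w*t + w/2) * (Ci h 1 - Ci h t) + cos (w*t + w/2) * (Si h 1 - Si h t))\<bar> \<le> integral {0..1} h"
    by (rule int_bound[OF h hpos t cs2 cs2])
  moreover have "U1 h t = cc * w * (- sin (w*t - w/2) * Ci h t + cos (w*t - w/2) * Si h t + (- sin (w*t + w/2) * (Ci h 1 - Ci h t) + cos (w*t + w/2) * (Si h 1 - Si h t)))"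
    unfolding U1_def by (simp only: diff_conv_add_uminus add.assoc mult_minus_left)
  ultimately show ?thesis using w_pos
    by (simp only: abs_mult abs_of_pos) (simp add: mult_left_mono)
qed

lemma U_lip:
  assumes h: "continuous_on {0..1} h" and hpos: "\<And>s. s \<in> {0..1} \<Longrightarrow> h s \<ge> 0"
    and t: "t \<in> {0..1}" and t': "t' \<in> {0..1}"
  shows "\<bar>U h t - U h t'\<bar> \<le> \<bar>cc\<bar> * w * integral {0..1} h * \<bar>t - t'\<bar>"
  using field_differentiable_bound[of "{0..1::real}" "U h" "U1 h" "\<bar>cc\<bar> * w * integral {0..1} h" t t']
    U_deriv[OF h] U1_bound[OF h hpos] t t' by auto

lemma U_cont: "continuous_on {0..1} h \<Longrightarrow> continuous_on {0..1} (U h)"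
  using U_deriv DERIV_continuous continuous_on_eq_continuous_within by blast

lemma U1_cont: "continuous_on {0..1} h \<Longrightarrow> continuous_on {0..1} (U1 h)"
  using U1_deriv DERIV_continuous continuous_on_eq_continuous_within by blast

lemma U_int:
  assumes h: "continuous_on {0..1} h"
  shows "integral {0..1} (U h) = integral {0..1} h / w^2"
proof -
  have "((\<lambda>t. h t - w^2 * U h t) has_integral (U1 h 1 - U1 h 0)) {0..1}"
    by (rule fundamental_theorem_of_calculus) (auto simp: has_real_derivative_iff_has_vector_derivative[symmetric] intro!: U1_deriv[OF h])
  then have "integral {0..1} (\<lambda>t. h t - w^2 * U h t) = 0" using U_periodic by (simp add: integral_unique)
  moreover have "integral {0..1} (\<lambda>t. h t - w^2 * U h t) = integral {0..1} h - w^2 * integral {0..1} (U h)"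
  proof -
    have a: "h integrable_on {0..1}" using integrable_continuous_interval[OF h] .
    have b: "(\<lambda>t. w^2 * U h t) integrable_on {0..1}"
      using integrable_on_cmult_left[OF integrable_continuous_interval[OF U_cont[OF h]], of "w^2"] by simp
    show ?thesis using Henstock_Kurzweil_Integration.integral_diff[OF a b] by simp
  qed
  ultimately show ?thesis using w_pos by (simp add: field_simps)
qed

end


definition nrm :: "real \<Rightarrow> (real \<Rightarrow> real) \<Rightarrow> real" where
  "nrm p u = (integral {0..1} (\<lambda>t. \<bar>u t\<bar> powr p)) powr (1/p)"

lemma powp_cont: "continuous_on S (u :: _ \<Rightarrow> real) \<Longrightarrow> (p::real) \<ge> 1 \<Longrightarrow> continuous_on S (\<lambda>t. \<bar>u t\<bar> powr p)"
proof -
  assume u: "continuous_on S u" and p: "p \<ge> 1"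
  have "continuous_on S (\<lambda>t. \<bar>u t\<bar>)" by (rule continuous_on_rabs[OF u])
  then show ?thesis using continuous_on_powr'[of S "\<lambda>t. \<bar>u t\<bar>" "\<lambda>t. p"] p by auto
qed

lemma powp_int: "continuous_on {0..1} (u :: real \<Rightarrow> real) \<Longrightarrow> (p::real) \<ge> 1 \<Longrightarrow> (\<lambda>t. \<bar>u t\<bar> powr p) integrable_on {0..1}"
  by (rule integrable_continuous_interval, rule powp_cont) assumption+

lemma tangent_powr:
  fixes a y p :: real
  assumes a: "a > 0" and y: "y \<ge> 0" and p: "p \<ge> 1"
  shows "y powr p \<ge> a powr p + p * a powr (p - 1) * (y - a)"
proof (cases "y = 0")
  case True
  have "a powr (p - 1) * a = a powr p" using a by (simp add: powr_diff)
  then have e: "p * a powr (p - 1) * (y - a) = - p * a powr p" using True by (simp add: algebra_simps)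
  have "(p - 1) * a powr p \<ge> 0" using p by simp
  then have "p * a powr p - a powr p \<ge> 0" by (simp add: left_diff_distrib)
  moreover have "y powr p = 0" using True by simp
  ultimately show ?thesis unfolding e by linarith
next
  case False
  have "y powr p - a powr p \<ge> (p * a powr (p - 1)) * (y - a)"
  proof (rule convex_on_imp_above_tangent[OF powr_convex[OF p]])
    show "connected {0::real<..}" by simp
    show "a \<in> interior {0<..}" using a by (simp add: interior_open)
    show "y \<in> {0<..}" using y False by simp
    show "((\<lambda>x. x powr p) has_field_derivative p * a powr (p - 1)) (at a within {0<..})"
      using has_real_derivative_powr[OF a] by (rule has_field_derivative_at_within)
  qed
  then show ?thesis by simp
qed

lemma nrm_ge_int:
  assumes u: "continuous_on {0..1} u" and p: "p \<ge> 1"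
  shows "integral {0..1} u \<le> nrm p u"
proof -
  define a where "a = integral {0..1} (\<lambda>t. \<bar>u t\<bar>)"
  have ui: "u integrable_on {0..1}" using integrable_continuous_interval[OF u] .
  have ai: "(\<lambda>t. \<bar>u t\<bar>) integrable_on {0..1}"
    by (intro integrable_continuous_interval continuous_intros u)
  have pi: "(\<lambda>t. \<bar>u t\<bar> powr p) integrable_on {0..1}" using powp_int[OF u p] .
  have "integral {0..1} u \<le> a"
    unfolding a_def by (rule integral_le[OF ui ai]) auto
  moreover have "a \<le> nrm p u"
  proof (cases "a > 0")
    case False
    then show ?thesis unfolding nrm_def by (smt (verit) powr_ge_zero)
  next
    case True
    have ci: "(\<lambda>t. a powr p + p * a powr (p - 1) * (\<bar>u t\<bar> - a)) integrable_on {0..1}"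
      by (intro integrable_continuous_interval continuous_intros u)
    have "integral {0..1} (\<lambda>t. a powr p + p * a powr (p - 1) * (\<bar>u t\<bar> - a)) \<le> integral {0..1} (\<lambda>t. \<bar>u t\<bar> powr p)"
      by (rule integral_le[OF ci pi]) (auto intro!: tangent_powr[OF True _ p])
    moreover have "integral {0..1} (\<lambda>t. a powr p + p * a powr (p - 1) * (\<bar>u t\<bar> - a)) = a powr p"
    proof -
      have i1: "(\<lambda>t. \<bar>u t\<bar> - a) integrable_on {0..1}"
        by (intro integrable_continuous_interval continuous_intros u)
      have "integral {0..1} (\<lambda>t. \<bar>u t\<bar> - a) = 0"
        using Henstock_Kurzweil_Integration.integral_diff[OF ai integrable_const_ivl[of a 0 1]] unfolding a_def by simp
      then have "integral {0..1} (\<lambda>t. p * a powr (p - 1) * (\<bar>u t\<bar> - a)) = 0" by simp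
      moreover have "(\<lambda>t. p * a powr (p - 1) * (\<bar>u t\<bar> - a)) integrable_on {0..1}"
        using integrable_on_cmult_left[OF i1, of "p * a powr (p - 1)"] by simp
      ultimately show ?thesis
        using integral_add[OF integrable_const_ivl[of "a powr p" 0 1], of "\<lambda>t. p * a powr (p - 1) * (\<bar>u t\<bar> - a)"] by simp
    qed
    ultimately have "a powr p \<le> integral {0..1} (\<lambda>t. \<bar>u t\<bar> powr p)" by simp
    then have "(a powr p) powr (1/p) \<le> nrm p u"
      unfolding nrm_def using p by (intro powr_mono2) auto
    then show ?thesis using p True by (simp add: powr_powr)
  qed
  ultimately show ?thesis by simp
qed

lemma nrm_le:
  assumes u: "continuous_on {0..1} u" and p: "p \<ge> 1" and B: "B \<ge> 0"
    and bd: "\<And>t. t \<in> {0..1} \<Longrightarrow> \<bar>u t\<bar> \<le> B"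
  shows "nrm p u \<le> B"
proof -
  have "integral {0..1} (\<lambda>t. \<bar>u t\<bar> powr p) \<le> integral {0..1} (\<lambda>t::real. B powr p)"
  proof (rule Henstock_Kurzweil_Integration.integral_le)
    show "(\<lambda>t. \<bar>u t\<bar> powr p) integrable_on {0..1}" by (rule powp_int[OF u p])
    show "(\<lambda>t. B powr p) integrable_on {0..1::real}" by (rule integrable_const_ivl)
  next
    fix t :: real assume "t \<in> {0..1}"
    then show "\<bar>u t\<bar> powr p \<le> B powr p" using bd p by (intro powr_mono2) auto
  qed
  also have "\<dots> = B powr p" by simp
  finally have "nrm p u \<le> (B powr p) powr (1/p)"
    unfolding nrm_def using p by (intro powr_mono2) (auto intro: integral_nonneg powp_int[OF u p])
  then show ?thesis using p B by (simp add: powr_powr)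
qed

lemma nrm_nonneg: "nrm p u \<ge> 0" unfolding nrm_def by simp

lemma nrm_scale:
  assumes c: "c > 0" and p: "p \<ge> 1" and u: "continuous_on {0..1} u"
  shows "nrm p (\<lambda>t. c * u t) = c * nrm p u"
proof -
  have "integral {0..1} (\<lambda>t. \<bar>c * u t\<bar> powr p) = c powr p * integral {0..1} (\<lambda>t. \<bar>u t\<bar> powr p)"
    using c by (simp add: abs_mult powr_mult)
  moreover have "integral {0..1} (\<lambda>t. \<bar>u t\<bar> powr p) \<ge> 0"
    by (rule integral_nonneg[OF powp_int[OF u p]]) simp
  ultimately show ?thesis unfolding nrm_def using c p
    by (simp add: powr_mult powr_powr)
qed



lemma tendsto_fun_iff: "((f \<longlongrightarrow> (l::nat\<Rightarrow>real)) F) \<longleftrightarrow> (\<forall>i. ((\<lambda>c. f c i) \<longlongrightarrow> l i) F)"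
  using limitin_componentwise[of "\<lambda>i. euclidean" UNIV f l F] by (simp add: euclidean_product_topology)

context bvp
begin

lemma Ci_conv:
  assumes hk: "\<And>k. continuous_on {0..1} (hk k)" and h: "continuous_on {0..1} h"
    and conv: "\<And>s. s \<in> {0..1} \<Longrightarrow> (\<lambda>k. hk k s) \<longlonglongrightarrow> h s"
    and bd: "\<And>k s. s \<in> {0..1} \<Longrightarrow> \<bar>hk k s\<bar> \<le> B" and t: "t \<in> {0..1}"
  shows "(\<lambda>k. Ci (hk k) t) \<longlonglongrightarrow> Ci h t" "(\<lambda>k. Si (hk k) t) \<longlonglongrightarrow> Si h t"
proof -
  have sub: "{0..t} \<subseteq> {0..1}" using t by auto
  show "(\<lambda>k. Ci (hk k) t) \<longlonglongrightarrow> Ci h t"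
    unfolding Ci_def
  proof (rule dominated_convergence(2)[where h="\<lambda>s. B"])
    show "(\<lambda>s. cos (w * s) * hk k s) integrable_on {0..t}" for k
      by (intro integrable_continuous_interval continuous_intros continuous_on_subset[OF hk sub])
    show "(\<lambda>s. B) integrable_on {0..t}" by (rule integrable_const_ivl)
    show "norm (cos (w * s) * hk k s) \<le> B" if "s \<in> {0..t}" for k s
    proof -
      have "\<bar>cos (w * s)\<bar> * \<bar>hk k s\<bar> \<le> 1 * B"
        using bd[of s k] that sub by (intro mult_mono) auto
      then show ?thesis by (simp add: abs_mult)
    qed
    show "(\<lambda>k. cos (w * s) * hk k s) \<longlonglongrightarrow> cos (w * s) * h s" if "s \<in> {0..t}" for s
      using conv[of s] that sub by (intro tendsto_intros) auto
  qed
  show "(\<lambda>k. Si (hk k) t) \<longlonglongrightarrow> Si h t"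
    unfolding Si_def
  proof (rule dominated_convergence(2)[where h="\<lambda>s. B"])
    show "(\<lambda>s. sin (w * s) * hk k s) integrable_on {0..t}" for k
      by (intro integrable_continuous_interval continuous_intros continuous_on_subset[OF hk sub])
    show "(\<lambda>s. B) integrable_on {0..t}" by (rule integrable_const_ivl)
    show "norm (sin (w * s) * hk k s) \<le> B" if "s \<in> {0..t}" for k s
    proof -
      have "\<bar>sin (w * s)\<bar> * \<bar>hk k s\<bar> \<le> 1 * B"
        using bd[of s k] that sub by (intro mult_mono) auto
      then show ?thesis by (simp add: abs_mult)
    qed
    show "(\<lambda>k. sin (w * s) * hk k s) \<longlonglongrightarrow> sin (w * s) * h s" if "s \<in> {0..t}" for s
      using conv[of s] that sub by (intro tendsto_intros) auto
  qed
qed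

lemma U_conv:
  assumes hk: "\<And>k. continuous_on {0..1} (hk k)" and h: "continuous_on {0..1} h"
    and conv: "\<And>s. s \<in> {0..1} \<Longrightarrow> (\<lambda>k. hk k s) \<longlonglongrightarrow> h s"
    and bd: "\<And>k s. s \<in> {0..1} \<Longrightarrow> \<bar>hk k s\<bar> \<le> B" and t: "t \<in> {0..1}"
  shows "(\<lambda>k. U (hk k) t) \<longlonglongrightarrow> U h t"
proof -
  note c1 = Ci_conv[OF hk h conv bd t] and c2 = Ci_conv[OF hk h conv bd, of 1]
  show ?thesis unfolding U_def
    by (intro tendsto_intros c1 c2) auto
qed

lemma nrmU_conv:
  assumes hk: "\<And>k. continuous_on {0..1} (hk k)" and h: "continuous_on {0..1} h"
    and conv: "\<And>s. s \<in> {0..1} \<Longrightarrow> (\<lambda>k. hk k s) \<longlonglongrightarrow> h s"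
    and bd: "\<And>k s. s \<in> {0..1} \<Longrightarrow> \<bar>hk k s\<bar> \<le> B"
    and bdU: "\<And>k s. s \<in> {0..1} \<Longrightarrow> \<bar>U (hk k) s\<bar> \<le> B'"
    and p: "p \<ge> 1"
  shows "(\<lambda>k. nrm p (U (hk k))) \<longlonglongrightarrow> nrm p (U h)"
proof -
  have B': "B' \<ge> 0" using bdU[of 0 0] by auto
  have "(\<lambda>k. integral {0..1} (\<lambda>t. \<bar>U (hk k) t\<bar> powr p)) \<longlonglongrightarrow> integral {0..1} (\<lambda>t. \<bar>U h t\<bar> powr p)"
  proof (rule dominated_convergence(2)[where h="\<lambda>s. B' powr p"])
    show "(\<lambda>t. \<bar>U (hk k) t\<bar> powr p) integrable_on {0..1}" for k
      by (rule powp_int[OF U_cont[OF hk] p])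
    show "(\<lambda>s. B' powr p) integrable_on {0..1::real}" by (rule integrable_const_ivl)
    show "norm (\<bar>U (hk k) s\<bar> powr p) \<le> B' powr p" if "s \<in> {0..1}" for k s
      using bdU[OF that, of k] p by (simp add: powr_mono2)
    show "(\<lambda>k. \<bar>U (hk k) s\<bar> powr p) \<longlonglongrightarrow> \<bar>U h s\<bar> powr p" if "s \<in> {0..1}" for s
      using U_conv[OF hk h conv bd that] p by (intro tendsto_intros) auto
  qed
  then show ?thesis unfolding nrm_def using p
    by (intro tendsto_intros) (auto intro!: always_eventually integral_nonneg powp_int U_cont hk)
qed

end

locale bvp2 = bvp +
  fixes F :: "real \<Rightarrow> real \<Rightarrow> real" and M c0 p :: real
  assumes Fcont: "\<And>x. continuous_on {0..1} x \<Longrightarrow> continuous_on {0..1} (\<lambda>s. F s (x s))"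
    and Fcontu: "\<And>s. s \<in> {0..1} \<Longrightarrow> continuous_on UNIV (F s)"
    and Fnn: "\<And>s u. s \<in> {0..1} \<Longrightarrow> F s u \<ge> 0"
    and FM: "\<And>s u. s \<in> {0..1} \<Longrightarrow> F s u \<le> M"
    and c0: "c0 > 0" and p: "p \<ge> 1"
begin

definition Fi where "Fi x = integral {0..1} (\<lambda>s. F s (x s))"
definition dl where "dl x = max 0 (c0 - Fi x)"
definition hh where "hh x = (\<lambda>s. F s (x s) + dl x)"
definition rho where "rho = 1 / (\<bar>cc\<bar> * w^2)"
definition TT where "TT x = (\<lambda>t. rho * U (hh x) t / nrm p (U (hh x)))"

lemma cc_nz: "cc \<noteq> 0" unfolding cc_def using w_pos s2nz by simp

lemma rho_pos: "rho > 0" unfolding rho_def using cc_nz w_pos by simp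

lemma Fi_nn: "continuous_on {0..1} x \<Longrightarrow> Fi x \<ge> 0"
  unfolding Fi_def by (rule integral_nonneg) (auto intro: integrable_continuous_interval Fcont Fnn)

lemma hh_props:
  assumes x: "continuous_on {0..1} x"
  shows "continuous_on {0..1} (hh x)" "\<And>s. s \<in> {0..1} \<Longrightarrow> hh x s \<ge> 0"
    "\<And>s. s \<in> {0..1} \<Longrightarrow> hh x s \<le> M + c0" "integral {0..1} (hh x) \<ge> c0"
proof -
  show "continuous_on {0..1} (hh x)" unfolding hh_def by (intro continuous_intros Fcont x)
  show "hh x s \<ge> 0" if "s \<in> {0..1}" for s unfolding hh_def dl_def using Fnn[OF that] by simp
  have "dl x \<le> c0" unfolding dl_def using Fi_nn[OF x] c0 by simp
  then show "hh x s \<le> M + c0" if "s \<in> {0..1}" for s unfolding hh_def using FM[OF that, of "x s"] by linarith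
  have i1: "(\<lambda>s. F s (x s)) integrable_on {0..1}" by (intro integrable_continuous_interval Fcont x)
  have "integral {0..1} (hh x) = Fi x + dl x"
    unfolding hh_def Fi_def using integral_add[OF i1 integrable_const_ivl[of "dl x" 0 1]] by simp
  then show "integral {0..1} (hh x) \<ge> c0" unfolding dl_def by simp
qed

lemma nrmU_pos:
  assumes x: "continuous_on {0..1} x"
  shows "nrm p (U (hh x)) \<ge> c0 / w^2" "nrm p (U (hh x)) > 0" "integral {0..1} (U (hh x)) \<le> nrm p (U (hh x))"
    "integral {0..1} (U (hh x)) = integral {0..1} (hh x) / w^2"
proof -
  note hp = hh_props[OF x]
  show i: "integral {0..1} (U (hh x)) = integral {0..1} (hh x) / w^2" by (rule U_int[OF hp(1)])
  show le: "integral {0..1} (U (hh x)) \<le> nrm p (U (hh x))" by (rule nrm_ge_int[OF U_cont[OF hp(1)] p])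
  have "c0 / w^2 \<le> integral {0..1} (hh x) / w^2" using hp(4) w_pos by (simp add: divide_right_mono)
  then show "nrm p (U (hh x)) \<ge> c0 / w^2" using i le by linarith
  then show "nrm p (U (hh x)) > 0" using c0 w_pos by (smt (verit) divide_pos_pos zero_less_power)
qed

lemma rho_cc: "rho * \<bar>cc\<bar> * w^2 = 1" unfolding rho_def using cc_nz w_pos by simp

lemma TT_bd:
  assumes x: "continuous_on {0..1} x" and t: "t \<in> {0..1}"
  shows "\<bar>TT x t\<bar> \<le> 1"
proof -
  note hp = hh_props[OF x] and np = nrmU_pos[OF x]
  have "\<bar>U (hh x) t\<bar> \<le> \<bar>cc\<bar> * integral {0..1} (hh x)" by (rule U_bound[OF hp(1) hp(2) t])
  also have "\<dots> = \<bar>cc\<bar> * w^2 * integral {0..1} (U (hh x))" using np(4) w_pos by simp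
  also have "\<dots> \<le> \<bar>cc\<bar> * w^2 * nrm p (U (hh x))" using np(3) by (simp add: mult_left_mono)
  finally have "rho * \<bar>U (hh x) t\<bar> \<le> rho * (\<bar>cc\<bar> * w^2 * nrm p (U (hh x)))"
    using rho_pos by (simp add: mult_left_mono)
  also have "\<dots> = nrm p (U (hh x))" using rho_cc by (metis mult.assoc mult_1)
  finally show ?thesis unfolding TT_def using np(2) rho_pos by (simp add: abs_mult divide_le_eq)
qed

lemma TT_lip:
  assumes x: "continuous_on {0..1} x" and t: "t \<in> {0..1}" and t': "t' \<in> {0..1}"
  shows "\<bar>TT x t - TT x t'\<bar> \<le> w * \<bar>t - t'\<bar>"
proof -
  note hp = hh_props[OF x] and np = nrmU_pos[OF x]
  have "\<bar>U (hh x) t - U (hh x) t'\<bar> \<le> \<bar>cc\<bar> * w * integral {0..1} (hh x) * \<bar>t - t'\<bar>" by (rule U_lip[OF hp(1) hp(2) t t'])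
  also have "\<dots> = \<bar>cc\<bar> * w^2 * w * integral {0..1} (U (hh x)) * \<bar>t - t'\<bar>" using np(4) w_pos by (simp add: power2_eq_square)
  also have "\<dots> \<le> \<bar>cc\<bar> * w^2 * w * nrm p (U (hh x)) * \<bar>t - t'\<bar>" using np(3) w_pos
    by (intro mult_right_mono mult_left_mono) auto
  finally have "rho * \<bar>U (hh x) t - U (hh x) t'\<bar> \<le> rho * (\<bar>cc\<bar> * w^2 * w * nrm p (U (hh x)) * \<bar>t - t'\<bar>)"
    using rho_pos by (simp add: mult_left_mono)
  also have "\<dots> = (rho * \<bar>cc\<bar> * w^2) * (w * \<bar>t - t'\<bar>) * nrm p (U (hh x))" by (simp add: algebra_simps)
  also have "\<dots> = (w * \<bar>t - t'\<bar>) * nrm p (U (hh x))" using rho_cc by simp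
  finally have *: "rho * \<bar>U (hh x) t - U (hh x) t'\<bar> \<le> (w * \<bar>t - t'\<bar>) * nrm p (U (hh x))" .
  have "TT x t - TT x t' = rho * (U (hh x) t - U (hh x) t') / nrm p (U (hh x))"
    unfolding TT_def by (simp add: diff_divide_distrib right_diff_distrib)
  then show ?thesis using * np(2) rho_pos by (simp add: abs_mult divide_le_eq)
qed

lemma TT_cont: "continuous_on {0..1} x \<Longrightarrow> continuous_on {0..1} (TT x)"
  unfolding TT_def by (intro continuous_intros U_cont hh_props(1)) (auto dest: nrmU_pos(2))

lemma nrm_TT: assumes x: "continuous_on {0..1} x" shows "nrm p (TT x) = rho"
proof -
  note hp = hh_props[OF x] and np = nrmU_pos[OF x]
  have e: "TT x = (\<lambda>t. (rho / nrm p (U (hh x))) * U (hh x) t)" unfolding TT_def by auto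
  have "nrm p (TT x) = (rho / nrm p (U (hh x))) * nrm p (U (hh x))"
    by (subst e, rule nrm_scale[OF _ p U_cont[OF hp(1)]]) (use np(2) rho_pos in simp)
  then show ?thesis using np(2) by simp
qed

lemma TT_conv:
  assumes xk: "\<And>k. continuous_on {0..1} (xk k)" and x: "continuous_on {0..1} x"
    and conv: "\<And>s. s \<in> {0..1} \<Longrightarrow> (\<lambda>k. xk k s) \<longlonglongrightarrow> x s" and t: "t \<in> {0..1}"
  shows "(\<lambda>k. TT (xk k) t) \<longlonglongrightarrow> TT x t"
proof -
  have Fconv: "(\<lambda>k. F s (xk k s)) \<longlonglongrightarrow> F s (x s)" if s: "s \<in> {0..1}" for s
    using continuous_on_tendsto_compose[OF Fcontu[OF s] conv[OF s]] by simp
  have "(\<lambda>k. Fi (xk k)) \<longlonglongrightarrow> Fi x"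
    unfolding Fi_def
  proof (rule dominated_convergence(2)[where h="\<lambda>s. M"])
    show "(\<lambda>s. F s (xk k s)) integrable_on {0..1}" for k by (intro integrable_continuous_interval Fcont xk)
    show "(\<lambda>s. M) integrable_on {0..1::real}" by (rule integrable_const_ivl)
    show "norm (F s (xk k s)) \<le> M" if "s \<in> {0..1}" for k s using Fnn[OF that] FM[OF that] by simp
    show "(\<lambda>k. F s (xk k s)) \<longlonglongrightarrow> F s (x s)" if "s \<in> {0..1}" for s by (rule Fconv[OF that])
  qed
  then have dconv: "(\<lambda>k. dl (xk k)) \<longlonglongrightarrow> dl x" unfolding dl_def by (intro tendsto_intros)
  have hconv: "(\<lambda>k. hh (xk k) s) \<longlonglongrightarrow> hh x s" if "s \<in> {0..1}" for s
    unfolding hh_def by (intro tendsto_intros Fconv that dconv)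
  have hbd: "\<bar>hh (xk k) s\<bar> \<le> M + c0" if "s \<in> {0..1}" for k s
    using hh_props[OF xk] that by (simp add: abs_of_nonneg)
  have Ubd: "\<bar>U (hh (xk k)) s\<bar> \<le> \<bar>cc\<bar> * (M + c0)" if "s \<in> {0..1}" for k s
  proof -
    note hp = hh_props[OF xk[of k]]
    have "\<bar>U (hh (xk k)) s\<bar> \<le> \<bar>cc\<bar> * integral {0..1} (hh (xk k))" by (rule U_bound[OF hp(1) hp(2) that])
    also have "integral {0..1} (hh (xk k)) \<le> integral {0..1} (\<lambda>s::real. M + c0)"
      by (rule Henstock_Kurzweil_Integration.integral_le[OF integrable_continuous_interval[OF hp(1)] integrable_const_ivl]) (use hp(3) in auto)
    finally show ?thesis by (simp add: mult_left_mono)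
  qed
  have hcont: "\<And>k. continuous_on {0..1} (hh (xk k))" using hh_props(1)[OF xk] .
  have "(\<lambda>k. U (hh (xk k)) t) \<longlonglongrightarrow> U (hh x) t"
    by (rule U_conv[OF hcont hh_props(1)[OF x] hconv hbd t])
  moreover have "(\<lambda>k. nrm p (U (hh (xk k)))) \<longlonglongrightarrow> nrm p (U (hh x))"
    by (rule nrmU_conv[OF hcont hh_props(1)[OF x] hconv hbd Ubd p])
  ultimately show ?thesis unfolding TT_def using nrmU_pos(2)[OF x]
    by (intro tendsto_intros) auto
qed

end


context bvp2
begin

definition phi :: "nat \<Rightarrow> nat \<Rightarrow> real \<Rightarrow> real" where
  "phi N i t = max 0 (1 - \<bar>real N * t - real i\<bar>)"
definition clamp :: "real \<Rightarrow> real" where "clamp u = max (-1) (min 1 u)"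
definition Ip :: "nat \<Rightarrow> (nat \<Rightarrow> real) \<Rightarrow> real \<Rightarrow> real" where
  "Ip N v t = (\<Sum>i\<le>N. phi N i t * clamp (v i)) / (\<Sum>i\<le>N. phi N i t)"

lemma den_pos:
  assumes t: "t \<in> {0..1}"
  shows "(\<Sum>i\<le>N. phi N i t) > 0"
proof -
  define i0 where "i0 = nat \<lfloor>real N * t\<rfloor>"
  have nt: "real N * t \<ge> 0" "real N * t \<le> real N" using t by (auto simp: mult_left_le)
  have fl0: "\<lfloor>real N * t\<rfloor> \<ge> 0" using nt by simp
  have "real i0 = of_int \<lfloor>real N * t\<rfloor>" unfolding i0_def using fl0 by simp
  then have a: "real i0 \<le> real N * t" "real N * t < real i0 + 1"
    by (simp_all add: of_int_floor_le)
  then have "i0 \<le> N" using nt by linarith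
  moreover have "phi N i0 t > 0" unfolding phi_def using a by auto
  moreover have "\<forall>i\<in>{..N}. phi N i t \<ge> 0" unfolding phi_def by simp
  ultimately have "phi N i0 t \<le> (\<Sum>i\<le>N. phi N i t)" by (intro member_le_sum) auto
  then show ?thesis using \<open>phi N i0 t > 0\<close> by linarith
qed

lemma den_nz: "t \<in> {0..1} \<Longrightarrow> (\<Sum>i\<le>N. phi N i t) \<noteq> 0"
  using den_pos by (metis less_irrefl)

lemma phi_cont [continuous_intros]: "continuous_on S (phi N i)"
  unfolding phi_def by (intro continuous_intros)

lemma Ip_cont: "continuous_on {0..1} (Ip N v)"
  unfolding Ip_def by (intro continuous_intros) (auto simp: den_nz)

lemma clamp_tendsto: "(f \<longlongrightarrow> a) FF \<Longrightarrow> ((\<lambda>x. clamp (f x)) \<longlongrightarrow> clamp a) FF"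
  unfolding clamp_def by (intro tendsto_intros)

lemma approx_step:
  "\<exists>z. continuous_on {0..1} z \<and> (\<forall>t\<in>{0..1}. \<bar>z t - TT z t\<bar> \<le> w / real (Suc k))"
proof -
  define N where "N = Suc k"
  have N: "real N > 0" unfolding N_def by simp
  define g where "g v = (\<lambda>i. if i \<le> N then TT (Ip N v) (real i / real N) else 0)" for v
  have iN: "real i / real N \<in> {0..1}" if "i \<le> N" for i using that N by auto
  have contg: "continuous_on UNIV g"
  proof (rule continuous_on_sequentiallyI)
    fix u :: "nat \<Rightarrow> nat \<Rightarrow> real" and a assume ua: "u \<longlonglongrightarrow> a"
    then have ui: "(\<lambda>n. u n i) \<longlonglongrightarrow> a i" for i using tendsto_fun_iff by blast
    have Ic: "(\<lambda>n. Ip N (u n) s) \<longlonglongrightarrow> Ip N a s" if "s \<in> {0..1}" for s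
      unfolding Ip_def by (intro tendsto_intros clamp_tendsto ui den_nz that)
    show "(\<lambda>n. g (u n)) \<longlonglongrightarrow> g a"
      unfolding tendsto_fun_iff
    proof
      fix i show "(\<lambda>n. g (u n) i) \<longlonglongrightarrow> g a i"
      proof (cases "i \<le> N")
        case True
        then show ?thesis unfolding g_def using TT_conv[OF Ip_cont Ip_cont Ic iN[OF True]] by simp
      next
        case False then show ?thesis unfolding g_def by simp
      qed
    qed
  qed
  have bd: "\<bar>g x i\<bar> \<le> 1" if "i \<le> N" for x i
    using that TT_bd[OF Ip_cont iN[OF that]] unfolding g_def by simp
  have zr: "g x i = 0" if "i > N" for x i
    using that unfolding g_def by simp
  obtain v where v: "g v = v"
    using brouwer_box[OF contg bd zr] by blast
  define z where "z = Ip N v"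
  have vi: "v i = TT z (real i / real N)" if "i \<le> N" for i
  proof -
    have "g v i = v i" using v by simp
    then show ?thesis using that unfolding g_def z_def by simp
  qed
  have cv: "clamp (v i) = TT z (real i / real N)" if "i \<le> N" for i
  proof -
    have "\<bar>v i\<bar> \<le> 1" using vi[OF that] TT_bd[OF Ip_cont iN[OF that]] unfolding z_def by simp
    then show ?thesis using vi[OF that] unfolding clamp_def by (simp add: abs_le_iff)
  qed
  have "\<bar>z t - TT z t\<bar> \<le> w / real N" if t: "t \<in> {0..1}" for t
  proof -
    define S where "S = (\<Sum>i\<le>N. phi N i t)"
    have S: "S > 0" unfolding S_def by (rule den_pos[OF t])
    have E1: "z t - TT z t = (\<Sum>i\<le>N. phi N i t * (TT z (real i / real N) - TT z t)) / S"
    proof -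
      have "z t = (\<Sum>i\<le>N. phi N i t * clamp (v i)) / S"
        unfolding z_def Ip_def S_def by simp
      also have "(\<Sum>i\<le>N. phi N i t * clamp (v i)) = (\<Sum>i\<le>N. phi N i t * TT z (real i / real N))"
        by (rule sum.cong) (auto simp: cv)
      finally have "z t = (\<Sum>i\<le>N. phi N i t * TT z (real i / real N)) / S" .
      moreover have "TT z t = (\<Sum>i\<le>N. phi N i t * TT z t) / S"
        using S unfolding S_def by (simp add: sum_distrib_right[symmetric])
      ultimately show ?thesis by (simp add: diff_divide_distrib sum_subtractf right_diff_distrib)
    qed
    have E2: "\<bar>\<Sum>i\<le>N. phi N i t * (TT z (real i / real N) - TT z t)\<bar> \<le> (\<Sum>i\<le>N. phi N i t * (w / real N))"
    proof -
      have "\<bar>\<Sum>i\<le>N. phi N i t * (TT z (real i / real N) - TT z t)\<bar> \<le> (\<Sum>i\<le>N. \<bar>phi N i t * (TT z (real i / real N) - TT z t)\<bar>)"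
        by (rule sum_abs)
      also have "\<dots> \<le> (\<Sum>i\<le>N. phi N i t * (w / real N))"
      proof (rule sum_mono)
        fix i assume i: "i \<in> {..N}"
        show "\<bar>phi N i t * (TT z (real i / real N) - TT z t)\<bar> \<le> phi N i t * (w / real N)"
        proof (cases "phi N i t = 0")
          case True then show ?thesis by simp
        next
          case False
          then have pp: "phi N i t > 0" "\<bar>real N * t - real i\<bar> < 1" unfolding phi_def by (auto simp: max_def split: if_splits)
          have "\<bar>real i / real N - t\<bar> = \<bar>real N * t - real i\<bar> / real N"
            using N by (simp add: field_simps abs_minus_commute)
          also have "\<dots> \<le> 1 / real N" using pp(2) N by (simp add: divide_right_mono)
          finally have d: "\<bar>real i / real N - t\<bar> \<le> 1 / real N" .
          have "\<bar>TT z (real i / real N) - TT z t\<bar> \<le> w * \<bar>real i / real N - t\<bar>"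
            using TT_lip[OF Ip_cont[of N v, folded z_def] iN t] i by auto
          also have "\<dots> \<le> w * (1 / real N)" using d w_pos by (intro mult_left_mono) auto
          finally have "\<bar>TT z (real i / real N) - TT z t\<bar> \<le> w / real N" by simp
          then have "phi N i t * \<bar>TT z (real i / real N) - TT z t\<bar> \<le> phi N i t * (w / real N)"
            using pp(1) by (intro mult_left_mono) auto
          then show ?thesis using pp(1) by (simp add: abs_mult)
        qed
      qed
      finally show ?thesis .
    qed
    have E3: "(\<Sum>i\<le>N. phi N i t * (w / real N)) = S * (w / real N)"
      unfolding S_def by (rule sum_distrib_right[symmetric])
    have "\<bar>z t - TT z t\<bar> \<le> S * (w / real N) / S"
    proof -
      have "\<bar>z t - TT z t\<bar> = \<bar>\<Sum>i\<le>N. phi N i t * (TT z (real i / real N) - TT z t)\<bar> / S"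
        using E1 S by simp
      also have "\<dots> \<le> S * (w / real N) / S"
        using E2 E3 S by (intro divide_right_mono) auto
      finally show ?thesis .
    qed
    then show ?thesis using S by simp
  qed
  moreover have "continuous_on {0..1} z" unfolding z_def by (rule Ip_cont)
  ultimately show ?thesis unfolding N_def by auto
qed

end


context bvp2
begin

lemma fixpoint: "\<exists>y. continuous_on {0..1} y \<and> (\<forall>t\<in>{0..1}. TT y t = y t)"
proof -
  obtain Z where Z: "\<And>k. continuous_on {0..1} (Z k)" "\<And>k t. t \<in> {0..1} \<Longrightarrow> \<bar>Z k t - TT (Z k) t\<bar> \<le> w / real (Suc k)"
    using approx_step by metis
  define Y where "Y k = TT (Z k)" for k
  obtain g r where g: "continuous_on {0..1} g" and r: "strict_mono (r :: nat \<Rightarrow> nat)"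
    and uc: "\<And>e. 0 < e \<Longrightarrow> \<exists>N. \<forall>n x. n \<ge> N \<and> x \<in> {0..1} \<longrightarrow> norm (Y (r n) x - g x) < e"
  proof (rule Arzela_Ascoli[of "{0..1::real}" Y 1])
    show "compact {0..1::real}" by simp
    show "norm (Y n x) \<le> 1" if "x \<in> {0..1}" for n x
      unfolding Y_def using TT_bd[OF Z(1) that] by simp
    show "\<exists>d>0. \<forall>n y. y \<in> {0..1} \<and> norm (x - y) < d \<longrightarrow> norm (Y n x - Y n y) < e"
      if "x \<in> {0..1}" "0 < e" for x e
    proof (intro exI conjI allI impI)
      show "e / (w + 1) > 0" using that w_pos by simp
      fix n y assume y: "y \<in> {0..1} \<and> norm (x - y) < e / (w + 1)"
      have "\<bar>Y n x - Y n y\<bar> \<le> w * \<bar>x - y\<bar>" unfolding Y_def using TT_lip[OF Z(1) that(1)] y by simp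
      also have "\<dots> \<le> w * (e / (w + 1))" using y w_pos by (intro mult_left_mono) auto
      also have "\<dots> < e" using w_pos that(2) by (simp add: field_simps)
      finally show "norm (Y n x - Y n y) < e" by simp
    qed
  qed blast
  have Yc: "(\<lambda>n. Y (r n) t) \<longlonglongrightarrow> g t" if t: "t \<in> {0..1}" for t
  proof (rule LIMSEQ_I)
    fix e :: real assume "e > 0"
    then obtain N where "\<forall>n x. n \<ge> N \<and> x \<in> {0..1} \<longrightarrow> norm (Y (r n) x - g x) < e" using uc by blast
    then show "\<exists>N. \<forall>n\<ge>N. norm (Y (r n) t - g t) < e" using t by blast
  qed
  have inv: "(\<lambda>n. w / real (Suc (r n))) \<longlonglongrightarrow> 0"
  proof -
    have "(\<lambda>n. w * inverse (real (Suc n))) \<longlonglongrightarrow> w * 0"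
      by (intro tendsto_intros LIMSEQ_inverse_real_of_nat)
    then have "(\<lambda>n. w / real (Suc n)) \<longlonglongrightarrow> 0" by (simp add: divide_inverse)
    from LIMSEQ_subseq_LIMSEQ[OF this r] show ?thesis by (simp add: o_def)
  qed
  have Zc: "(\<lambda>n. Z (r n) t) \<longlonglongrightarrow> g t" if t: "t \<in> {0..1}" for t
  proof -
    have "(\<lambda>n. Z (r n) t - Y (r n) t) \<longlonglongrightarrow> 0"
    proof (rule Lim_null_comparison[OF _ inv])
      show "\<forall>\<^sub>F n in sequentially. norm (Z (r n) t - Y (r n) t) \<le> w / real (Suc (r n))"
        unfolding Y_def using Z(2)[OF t] by simp
    qed
    from tendsto_add[OF this Yc[OF t]] show ?thesis by simp
  qed
  have "TT g t = g t" if t: "t \<in> {0..1}" for t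
  proof -
    have "(\<lambda>n. TT (Z (r n)) t) \<longlonglongrightarrow> TT g t"
      by (rule TT_conv[OF Z(1) g Zc t])
    moreover have "(\<lambda>n. TT (Z (r n)) t) \<longlonglongrightarrow> g t" using Yc[OF t] unfolding Y_def .
    ultimately show ?thesis by (rule LIMSEQ_unique)
  qed
  then show ?thesis using g by blast
qed

end


definition clip :: "real \<Rightarrow> real" where "clip u = max (-1) (min 1 u)"

lemma clip_range: "clip u \<in> {-1..1}" unfolding clip_def by auto
lemma clip_id: "\<bar>u\<bar> \<le> 1 \<Longrightarrow> clip u = u" unfolding clip_def by auto
lemma clip_cont [continuous_intros]: "continuous_on S g \<Longrightarrow> continuous_on S (\<lambda>x. clip (g x))"
  unfolding clip_def by (intro continuous_intros)

context bvp2 begin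
lemma nrm_cong: "(\<And>t. t \<in> {0..1} \<Longrightarrow> u t = v t) \<Longrightarrow> nrm q u = nrm q v"
  unfolding nrm_def by (metis (no_types, lifting) integral_cong)
end

lemma int_lower:
  fixes g :: "real \<Rightarrow> real"
  assumes g: "continuous_on {0..1} g" and gnn: "\<And>s. s \<in> {0..1} \<Longrightarrow> g s \<ge> 0"
    and ab: "0 \<le> a" "a \<le> b" "b \<le> 1" and ge: "\<And>s. s \<in> {a..b} \<Longrightarrow> g s \<ge> c"
  shows "integral {0..1} g \<ge> c * (b - a)"
proof -
  have sub: "{a..b} \<subseteq> {0..1}" using ab by auto
  have gi: "g integrable_on {0..1}" using g by (rule integrable_continuous_interval)
  have gi2: "g integrable_on {a..b}" using integrable_on_subinterval[OF gi sub] .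
  have "integral {a..b} (\<lambda>s. c) \<le> integral {a..b} g"
    by (rule Henstock_Kurzweil_Integration.integral_le[OF integrable_const_ivl gi2]) (use ge in auto)
  moreover have "integral {a..b} (\<lambda>s. c) = c * (b - a)" using ab by (simp add: content_real)
  moreover have "integral {a..b} g \<le> integral {0..1} g"
    by (rule integral_subset_le[OF sub gi2 gi]) (use gnn in auto)
  ultimately show ?thesis by linarith
qed

theorem theorem3p5:
  fixes w r p :: real and f :: "real \<Rightarrow> real \<Rightarrow> real"
  assumes w_pos: "w > 0"
    and w_nonres: "\<forall>n::nat. n \<ge> 1 \<longrightarrow> w \<noteq> 2 * real n * pi"
    and r: "r \<ge> 1"
    and f_cont: "continuous_on ({0..1} \<times> {-r..r}) (\<lambda>(t, u). f t u)"
    and f_nonneg: "\<forall>t\<in>{0..1}. \<forall>u\<in>{-r..r}. f t u \<ge> 0"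
    and f_pos: "\<forall>t\<in>{0..1}. \<forall>u. 2 / w * \<bar>sin (w / 2)\<bar> \<le> \<bar>u\<bar> \<and> \<bar>u\<bar> \<le> r \<longrightarrow> f t u > 0"
    and p: "p \<ge> 1"
  shows "\<exists>lam > 0. \<exists>x. is_periodic_bvp_solution w lam f x \<and>
           (\<forall>t\<in>{0..1}. x t \<in> {-r..r}) \<and>
           (integral {0..1} (\<lambda>t. \<bar>x t\<bar> powr p)) powr (1 / p) = 2 / w * \<bar>sin (w / 2)\<bar>"
proof -
  have s2nz: "sin (w/2) \<noteq> 0"
  proof
    assume "sin (w/2) = 0"
    then obtain i :: int where i: "w/2 = of_int i * pi" using sin_zero_iff_int2 by blast
    have "of_int i * pi > 0" using w_pos i by linarith
    then have ip: "i > 0" by (simp add: zero_less_mult_iff)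
    then have "w = 2 * real (nat i) * pi" using i by simp
    moreover have "nat i \<ge> 1" using ip by simp
    ultimately show False using w_nonres by blast
  qed
  interpret bvp w using w_pos s2nz by unfold_locales
  define rho0 where "rho0 = 2 / w * \<bar>sin (w / 2)\<bar>"
  have rho0_pos: "rho0 > 0" unfolding rho0_def using w_pos s2nz by simp
  have rho0_le: "rho0 \<le> 1"
  proof -
    have "\<bar>sin (w/2)\<bar> \<le> w/2" using abs_sin_x_le_abs_x[of "w/2"] w_pos by simp
    then show ?thesis unfolding rho0_def using w_pos by (simp add: field_simps)
  qed
  define K1 where "K1 = {0..1::real} \<times> {-1..1::real}"
  have K1sub: "K1 \<subseteq> {0..1} \<times> {-r..r}" unfolding K1_def using r by auto
  have fc1: "continuous_on K1 (\<lambda>(t, u). f t u)" using continuous_on_subset[OF f_cont K1sub] .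
  have K1c: "compact K1" unfolding K1_def by (intro compact_Times compact_Icc)
  obtain M where M: "\<And>z. z \<in> K1 \<Longrightarrow> \<bar>(\<lambda>(t, u). f t u) z\<bar> \<le> M"
    using compact_imp_bounded[OF compact_continuous_image[OF fc1 K1c]] unfolding bounded_iff by force
  define F where "F s u = f s (clip u)" for s u
  have Fcomp: "continuous_on S (\<lambda>z. F (a z) (b z))" if "continuous_on S a" "continuous_on S b" "a ` S \<subseteq> {0..1}" for S a b
  proof -
    have "continuous_on S (\<lambda>z. (\<lambda>(t, u). f t u) (a z, clip (b z)))"
      by (rule continuous_on_compose2[OF fc1]) (use that clip_range in \<open>auto intro!: continuous_intros simp: K1_def\<close>)
    then show ?thesis unfolding F_def by simp
  qed
  have Fcont: "continuous_on {0..1} (\<lambda>s. F s (x s))" if "continuous_on {0..1} x" for x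
    using Fcomp[of "{0..1}" "\<lambda>s. s" x] that by (auto intro: continuous_intros)
  have Fcontu: "continuous_on UNIV (F s)" if "s \<in> {0..1}" for s
    using Fcomp[of UNIV "\<lambda>_. s" "\<lambda>u. u"] that by (auto intro: continuous_intros)
  have Fnn: "F s u \<ge> 0" if "s \<in> {0..1}" for s u
    unfolding F_def using f_nonneg that clip_range[of u] r by auto
  have FM: "F s u \<le> M" if "s \<in> {0..1}" for s u
    unfolding F_def using M[of "(s, clip u)"] that clip_range[of u] unfolding K1_def by auto
  define K2 where "K2 = {0..1::real} \<times> ({-1..-rho0} \<union> {rho0..1})"
  have K2c: "compact K2" unfolding K2_def by (intro compact_Times compact_Un compact_Icc)
  have K2ne: "K2 \<noteq> {}" unfolding K2_def using rho0_le by auto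
  have K2sub: "K2 \<subseteq> K1" unfolding K2_def K1_def using rho0_pos by auto
  obtain z0 where z0: "z0 \<in> K2" "\<And>z. z \<in> K2 \<Longrightarrow> (\<lambda>(t, u). f t u) z0 \<le> (\<lambda>(t, u). f t u) z"
    using continuous_attains_inf[OF K2c K2ne continuous_on_subset[OF fc1 K2sub]] by blast
  define m where "m = (\<lambda>(t, u). f t u) z0"
  have m_pos: "m > 0"
  proof -
    obtain t u where tu: "z0 = (t, u)" by fastforce
    have "t \<in> {0..1}" "rho0 \<le> \<bar>u\<bar>" "\<bar>u\<bar> \<le> r" using z0(1) r rho0_pos unfolding tu K2_def by auto
    then show ?thesis unfolding m_def tu using f_pos unfolding rho0_def by auto
  qed
  have m_le: "f t u \<ge> m" if "t \<in> {0..1}" "rho0 \<le> \<bar>u\<bar>" "\<bar>u\<bar> \<le> 1" for t u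
  proof -
    have "(t, u) \<in> K2" unfolding K2_def using that by auto
    then show ?thesis using z0(2) unfolding m_def by fastforce
  qed
  obtain d0 where d0: "d0 > 0" and d0p: "\<And>z z'. z \<in> K1 \<Longrightarrow> z' \<in> K1 \<Longrightarrow> dist z' z < d0 \<Longrightarrow>
      dist ((\<lambda>(t, u). f t u) z') ((\<lambda>(t, u). f t u) z) < m / 2"
    using compact_uniformly_continuous[OF fc1 K1c] m_pos unfolding uniformly_continuous_on_def
    by (metis half_gt_zero)
  define d where "d = min (1/2) (d0 / (2 * (w + 1)))"
  have d_pos: "d > 0" unfolding d_def using d0 w_pos by simp
  have d_le1: "d \<le> 1/2" unfolding d_def by (rule min.cobounded1)
  have "d \<le> d0 / (2 * (w + 1))" unfolding d_def by (rule min.cobounded2)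
  then have "d * (w + 1) \<le> d0 / (2 * (w + 1)) * (w + 1)" using w_pos by (intro mult_right_mono) auto
  moreover have "d0 / (2 * (w + 1)) * (w + 1) = d0 / 2" using w_pos by (simp add: field_simps)
  ultimately have d_le2: "d * (w + 1) \<le> d0 / 2" by linarith
  define c0 where "c0 = m / 2 * d"
  have c0_pos: "c0 > 0" unfolding c0_def using m_pos d_pos by simp
  interpret bvp2 w F M c0 p
    by unfold_locales (use Fcont Fcontu Fnn FM c0_pos p in auto)
  have rho_eq: "rho = rho0"
    unfolding rho_def cc_def rho0_def using w_pos s2nz by (simp add: abs_mult field_simps power2_eq_square)
  obtain y where yc: "continuous_on {0..1} y" and yfix: "\<And>t. t \<in> {0..1} \<Longrightarrow> TT y t = y t"
    using fixpoint by blast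
  have ybd: "\<bar>y t\<bar> \<le> 1" if "t \<in> {0..1}" for t using TT_bd[OF yc that] yfix[OF that] by simp
  have ylip: "\<bar>y t - y t'\<bar> \<le> w * \<bar>t - t'\<bar>" if "t \<in> {0..1}" "t' \<in> {0..1}" for t t'
    using TT_lip[OF yc that] yfix that by simp
  have ynrm: "nrm p y = rho"
    using nrm_cong[of "TT y" y p] yfix nrm_TT[OF yc] by simp
  obtain t0 where t0: "t0 \<in> {0..1}" "\<And>t. t \<in> {0..1} \<Longrightarrow> \<bar>y t\<bar> \<le> \<bar>y t0\<bar>"
  proof -
    have "continuous_on {0..1} (\<lambda>t. \<bar>y t\<bar>)" by (rule continuous_on_rabs[OF yc])
    then show ?thesis using continuous_attains_sup[of "{0..1::real}" "\<lambda>t. \<bar>y t\<bar>"] that by auto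
  qed
  have yt0: "\<bar>y t0\<bar> \<ge> rho0"
    using nrm_le[OF yc p _ t0(2)] ynrm rho_eq by simp
  have Fi_ge: "Fi y \<ge> c0"
  proof -
    have ft0: "f t0 (y t0) \<ge> m" using m_le[OF t0(1) yt0 ybd[OF t0(1)]] .
    have near: "F s (y s) \<ge> m / 2" if s: "s \<in> {0..1}" "\<bar>s - t0\<bar> \<le> d" for s
    proof -
      have z1: "(t0, y t0) \<in> K1" "(s, y s) \<in> K1" unfolding K1_def using t0(1) s ybd[OF t0(1)] ybd[OF s(1)] by (auto simp: abs_le_iff)
      have "dist (s, y s) (t0, y t0) \<le> dist s t0 + dist (y s) (y t0)"
        unfolding dist_Pair_Pair using sqrt_sum_squares_le_sum_abs[of "dist s t0" "dist (y s) (y t0)"] by simp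
      also have "\<dots> \<le> d + w * d"
        using s ylip[OF s(1) t0(1)] w_pos by (simp add: dist_real_def) (meson add_mono mult_left_mono order.trans less_imp_le)
      also have "\<dots> = d * (w + 1)" by (simp add: algebra_simps)
      also have "\<dots> < d0" using d_le2 d0 by linarith
      finally have "dist (f s (y s)) (f t0 (y t0)) < m / 2" using d0p[OF z1(1) z1(2)] by simp
      then have "\<bar>f s (y s) - f t0 (y t0)\<bar> < m / 2" by (simp add: dist_real_def)
      then have "f s (y s) \<ge> m / 2" using ft0 by arith
      then show ?thesis unfolding F_def using clip_id[OF ybd[OF s(1)]] by simp
    qed
    have Fyc: "continuous_on {0..1} (\<lambda>s. F s (y s))" by (rule Fcont[OF yc])
    have Fyn: "\<And>s. s \<in> {0..1} \<Longrightarrow> F s (y s) \<ge> 0" using Fnn by simp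
    show ?thesis
    proof (cases "t0 \<le> 1/2")
      case True
      have "integral {0..1} (\<lambda>s. F s (y s)) \<ge> m / 2 * ((t0 + d) - t0)"
        by (rule int_lower[OF Fyc Fyn]) (use True t0(1) d_le1 d_pos near in auto)
      then show ?thesis unfolding Fi_def c0_def by simp
    next
      case False
      have "integral {0..1} (\<lambda>s. F s (y s)) \<ge> m / 2 * (t0 - (t0 - d))"
        by (rule int_lower[OF Fyc Fyn]) (use False t0(1) d_le1 d_pos near in auto)
      then show ?thesis unfolding Fi_def c0_def by simp
    qed
  qed
  have dl0: "dl y = 0" unfolding dl_def using Fi_ge by simp
  define h where "h = hh y"
  have hc: "continuous_on {0..1} h" unfolding h_def by (rule hh_props(1)[OF yc])
  define lam where "lam = rho / nrm p (U h)"
  have lam_pos: "lam > 0" unfolding lam_def h_def using rho_pos nrmU_pos(2)[OF yc] by simp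
  define x where "x t = lam * U h t" for t
  have xy: "x t = y t" if "t \<in> {0..1}" for t
    using yfix[OF that] unfolding x_def lam_def TT_def h_def by simp
  have sol: "is_periodic_bvp_solution w lam f x"
    unfolding is_periodic_bvp_solution_def
  proof (intro exI conjI ballI)
    fix t :: real assume t: "t \<in> {0..1}"
    show "(x has_real_derivative lam * U1 h t) (at t within {0..1})"
      unfolding x_def[abs_def] by (rule DERIV_cmult[OF U_deriv[OF hc t]])
    show "((\<lambda>t. lam * U1 h t) has_real_derivative lam * (h t - w^2 * U h t)) (at t within {0..1})"
      by (rule DERIV_cmult[OF U1_deriv[OF hc t]])
    have "h t = f t (x t)" unfolding h_def hh_def dl0 F_def using clip_id[OF ybd[OF t]] xy[OF t] by simp
    then show "lam * (h t - w^2 * U h t) + w^2 * x t = lam * f t (x t)"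
      unfolding x_def by (simp add: algebra_simps)
  next
    show "continuous_on {0..1} (\<lambda>t. lam * (h t - w^2 * U h t))"
      by (intro continuous_intros hc U_cont[OF hc])
    show "x 0 = x 1" unfolding x_def using U_periodic by simp
    show "lam * U1 h 0 = lam * U1 h 1" using U_periodic by simp
  qed
  have xr: "\<forall>t\<in>{0..1}. x t \<in> {-r..r}"
  proof
    fix t :: real assume t: "t \<in> {0..1}"
    show "x t \<in> {-r..r}" using xy[OF t] ybd[OF t] r by (auto simp: abs_le_iff)
  qed
  have "(integral {0..1} (\<lambda>t. \<bar>x t\<bar> powr p)) powr (1 / p) = nrm p x" unfolding nrm_def ..
  also have "\<dots> = nrm p y" by (rule nrm_cong[OF xy])
  also have "\<dots> = 2 / w * \<bar>sin (w / 2)\<bar>" using ynrm rho_eq unfolding rho0_def by simp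
  finally show ?thesis using sol xr lam_pos by blast
qed

end
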